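(* Let $\mathcal O$ be the $G_0$-orbit of a point $z_0\in\mathfrak g^*\setminus\mathrm{Sing}\,\mathfrak g^*$. Let $U\subset\mathfrak g^*\setminus\mathrm{Sing}\,\mathfrak g^*$ be an open neighbourhood of $z_0$, and let $g_1,\dots,g_r$, with $r=\operatorname{rank}\mathfrak g$, be holomorphic functions on $U$ with $c(g_m)=0$ whose differentials are linearly independent at every point of $U$. Then, at every point of $\mathcal O\cap U$, $T^{1,0}\mathcal O$ is spanned by the vector fields $c(\tilde g_1),\dots,c(\tilde g_r)$, where $\tilde g_m(z)=\sum_i\overline{\frac{\partial g_m}{\partial z_i}(z)}\,z_i$.
   Context: Setting. $\mathfrak g_0$ is a finite-dimensional nonabelian real Lie algebra and $\mathfrak g=\mathfrak g_0^{\mathbb C}$, with $n=\dim_{\mathbb C}\mathfrak g$. Fix a basis of $\mathfrak g_0$ with real structure constants $c_{ij}^k$; $z_k$ are the complex linear coordinates on $\mathfrak g^*$. $G_0$ is the connected real Lie group with Lie algebra $\mathfrak g_0$, acting by the coadjoint action. Bivector and Hamiltonian fields. $c=c_{ij}^kz_k\partial_{z_i}\wedge\partial_{z_j}$, and for a smooth complex function $f$, $c(f)=c_{ij}^kz_k\frac{\partial f}{\partial z_i}\partial_{z_j}$. Singular set and rank. $\mathrm{Sing}\,\mathfrak g^*$ is the set where $(c_{ij}^kz_k)$ has non-maximal rank, and $\operatorname{rank}\mathfrak g=n-\max_z\operatorname{rank}(c_{ij}^kz_k)$. $T^{1,0}\mathcal O=T^{\mathbb C}\mathcal O\cap T^{1,0}\mathfrak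 g^*$. *)

theory Defs
  imports "HOL-Analysis.Analysis"
begin

text \<open>A real Lie algebra g0 of dimension n = CARD('n) is given by real structure
  constants c i j k (= c_ij^k, i.e. [e_i,e_j] = sum_k c_ij^k e_k) w.r.t. a fixed basis
  indexed by the finite type 'n. Points of g* = (g0^C)* are z :: complex^'n, z $ k = z_k.\<close>

definition lie_structure_constants :: "('n::finite \<Rightarrow> 'n \<Rightarrow> 'n \<Rightarrow> real) \<Rightarrow> bool" where
  "lie_structure_constants c \<longleftrightarrow>
     (\<forall>i j k. c i j k = - c j i k) \<and>
     (\<forall>i j k m. (\<Sum>l\<in>UNIV. c i j l * c l k m + c j k l * c l i m + c k i l * c l j m) = 0)"

definition nonabelian :: "('n::finite \<Rightarrow> 'n \<Rightarrow> 'n \<Rightarrow> real) \<Rightarrow> bool" where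
  "nonabelian c \<longleftrightarrow> (\<exists>i j k. c i j k \<noteq> 0)"

definition poisson_matrix :: "('n::finite \<Rightarrow> 'n \<Rightarrow> 'n \<Rightarrow> real) \<Rightarrow> complex^'n \<Rightarrow> complex^'n^'n" where
  "poisson_matrix c z = (\<chi> i j. \<Sum>k\<in>UNIV. complex_of_real (c i j k) * z $ k)"

definition max_rank :: "('n::finite \<Rightarrow> 'n \<Rightarrow> 'n \<Rightarrow> real) \<Rightarrow> nat" where
  "max_rank c = Max {rank (poisson_matrix c z) | z. True}"

definition Sing :: "('n::finite \<Rightarrow> 'n \<Rightarrow> 'n \<Rightarrow> real) \<Rightarrow> (complex^'n) set" where
  "Sing c = {z. rank (poisson_matrix c z) < max_rank c}"

definition lie_rank :: "('n::finite \<Rightarrow> 'n \<Rightarrow> 'n \<Rightarrow> real) \<Rightarrow> nat" where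
  "lie_rank c = CARD('n) - max_rank c"

text \<open>Infinitesimal (complexified) coadjoint action of X = sum_i X_i e_i in g0 on g*:
  (ad*_X z)(e_j) = - z([X,e_j]).\<close>
definition coad :: "('n::finite \<Rightarrow> 'n \<Rightarrow> 'n \<Rightarrow> real) \<Rightarrow> real^'n \<Rightarrow> complex^'n \<Rightarrow> complex^'n" where
  "coad c X z = (\<chi> j. - (\<Sum>i\<in>UNIV. \<Sum>k\<in>UNIV. complex_of_real (X $ i * c i j k) * z $ k))"

definition lin_exp :: "(complex^'n \<Rightarrow> complex^'n) \<Rightarrow> complex^'n \<Rightarrow> complex^'n" where
  "lin_exp A v = (\<Sum>k. (1 / fact k) *\<^sub>R (A ^^ k) v)"

text \<open>The G0-orbit of z0 for the connected group G0: G0 is generated by exp(g0) and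
  Ad*(exp X) = exp(ad* X), so the orbit consists of the images of z0 under finite
  products of exp(ad*_X), X in g0.\<close>
definition coadjoint_orbit :: "('n::finite \<Rightarrow> 'n \<Rightarrow> 'n \<Rightarrow> real) \<Rightarrow> complex^'n \<Rightarrow> (complex^'n) set" where
  "coadjoint_orbit c z0 = {fold (\<lambda>X v. lin_exp (coad c X) v) Xs z0 | Xs. True}"

text \<open>Real tangent space of the orbit at z: image of the infinitesimal action g0 -> T_z g*
  (the differential at the identity of the orbit map), as real vectors in C^n = R^2n.\<close>
definition orbit_tangent :: "('n::finite \<Rightarrow> 'n \<Rightarrow> 'n \<Rightarrow> real) \<Rightarrow> complex^'n \<Rightarrow> (complex^'n) set" where
  "orbit_tangent c z = {coad c X z | X. True}"

definition cnj_vec :: "complex^'n \<Rightarrow> complex^'n" where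
  "cnj_vec w = (\<chi> j. cnj (w $ j))"

text \<open>Complexification of a real subspace S of C^n = R^2n, inside the complexified tangent
  space, where (a,b) stands for sum_j a_j d/dz_j + b_j d/dzbar_j; a real vector w
  corresponds to (w, conj w).\<close>
definition complexified :: "(complex^'n) set \<Rightarrow> ((complex^'n) \<times> (complex^'n)) set" where
  "complexified S = {(\<Sum>l<k. a l *s w l, \<Sum>l<k. a l *s cnj_vec (w l)) |
                       k (a :: nat \<Rightarrow> complex) (w :: nat \<Rightarrow> complex^'n). \<forall>l<k. w l \<in> S}"

text \<open>T^{1,0}O at z = T^C O \<inter> T^{1,0} g*, with (1,0)-vectors sum_j a_j d/dz_j written as a.\<close>
definition T10_orbit :: "('n::finite \<Rightarrow> 'n \<Rightarrow> 'n \<Rightarrow> real) \<Rightarrow> complex^'n \<Rightarrow> (complex^'n) set" where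
  "T10_orbit c z = {a. (a, 0) \<in> complexified (orbit_tangent c z)}"

definition holo_on :: "(complex^'n \<Rightarrow> complex) \<Rightarrow> (complex^'n) set \<Rightarrow> bool" where
  "holo_on f U \<longleftrightarrow> (\<forall>z\<in>U. \<exists>L. (f has_derivative L) (at z) \<and> (\<forall>(s::complex) v. L (s *s v) = s * L v))"

definition dx :: "(complex^'n \<Rightarrow> complex) \<Rightarrow> 'n \<Rightarrow> complex^'n \<Rightarrow> complex" where
  "dx f i z = vector_derivative (\<lambda>t::real. f (z + t *\<^sub>R axis i 1)) (at 0)"

definition dy :: "(complex^'n \<Rightarrow> complex) \<Rightarrow> 'n \<Rightarrow> complex^'n \<Rightarrow> complex" where
  "dy f i z = vector_derivative (\<lambda>t::real. f (z + t *\<^sub>R axis i \<i>)) (at 0)"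

definition wirtinger :: "(complex^'n \<Rightarrow> complex) \<Rightarrow> 'n \<Rightarrow> complex^'n \<Rightarrow> complex" where
  "wirtinger f i z = (dx f i z - \<i> * dy f i z) / 2"

text \<open>The (1,0) vector field c(f) = c_ij^k z_k (df/dz_i) d/dz_j, as component vector.\<close>
definition hamfield :: "('n::finite \<Rightarrow> 'n \<Rightarrow> 'n \<Rightarrow> real) \<Rightarrow> (complex^'n \<Rightarrow> complex) \<Rightarrow> complex^'n \<Rightarrow> complex^'n" where
  "hamfield c f z = (\<chi> j. \<Sum>i\<in>UNIV. \<Sum>k\<in>UNIV. complex_of_real (c i j k) * z $ k * wirtinger f i z)"

definition tilde :: "(complex^'n \<Rightarrow> complex) \<Rightarrow> complex^'n \<Rightarrow> complex" where
  "tilde g z = (\<Sum>i\<in>UNIV. cnj (wirtinger g i z) * z $ i)"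

end

theory Submission
  imports Defs "HOL-Complex_Analysis.Complex_Analysis"
begin


definition cp :: "real \<Rightarrow> real \<Rightarrow> complex" where
  "cp r s = complex_of_real r * exp (2 * complex_of_real pi * \<i> * complex_of_real s)"
definition cpk :: "real \<Rightarrow> complex \<Rightarrow> real \<Rightarrow> complex" where
  "cpk r x s = (complex_of_real (2 * pi) * \<i> * complex_of_real r * exp (2 * complex_of_real pi * \<i> * complex_of_real s))
      / (cp r s - x)^2 / (complex_of_real (2 * pi) * \<i>)"

lemma norm_cp: "r \<ge> 0 \<Longrightarrow> norm (cp r s) = r"
  by (simp add: cp_def norm_mult)

lemma continuous_cp[continuous_intros]: "continuous_on A f \<Longrightarrow> continuous_on A (\<lambda>x. cp r (f x))"
  unfolding cp_def by (intro continuous_intros)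

lemma deriv_circle_integral:
  fixes f :: "complex \<Rightarrow> complex"
  assumes hol: "f holomorphic_on ball 0 R" and r: "0 < r" "r < R" and x: "x \<in> ball 0 r"
  shows "deriv f x = integral {0..1} (\<lambda>s. f (cp r s) * cpk r x s)"
proof -
  have cb: "cball 0 r \<subseteq> ball (0::complex) R" using r by auto
  have "continuous_on (cball 0 r) f"
    using holomorphic_on_imp_continuous_on[OF hol] cb continuous_on_subset by blast
  moreover have "f holomorphic_on ball 0 r" using hol cb holomorphic_on_subset by fastforce
  ultimately have "((\<lambda>u. f u / (u - x) ^ Suc 1) has_contour_integral
        complex_of_real (2 * pi) * \<i> / fact 1 * (deriv ^^ 1) f x) (circlepath 0 r)"
    using Cauchy_has_contour_integral_higher_derivative_circlepath x by blast
  then have "((\<lambda>s. f (cp r s) / (cp r s - x)^2 * (complex_of_real (2 * pi) * \<i> * complex_of_real r * exp (2 * complex_of_real pi * \<i> * complex_of_real s)))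
      has_integral complex_of_real (2 * pi) * \<i> / fact 1 * (deriv ^^ 1) f x) {0..1}"
    unfolding has_contour_integral_def
    apply (rule has_integral_eq[rotated])
    apply (subst vector_derivative_circlepath01, simp, simp)
    apply (simp add: cp_def circlepath power2_eq_square)
    done
  then have "((\<lambda>s. f (cp r s) / (cp r s - x)^2 * (complex_of_real (2 * pi) * \<i> * complex_of_real r * exp (2 * complex_of_real pi * \<i> * complex_of_real s)))
      has_integral complex_of_real (2 * pi) * \<i> * deriv f x) {0..1}" by simp
  from has_integral_mult_left[OF this, of "1 / (complex_of_real (2 * pi) * \<i>)"]
  have "((\<lambda>s. f (cp r s) * cpk r x s) has_integral deriv f x) {0..1}"
    by (simp add: cpk_def field_simps)
  then show ?thesis by (simp add: integral_unique)
qed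

lemma cpk_cont: 
  assumes "0 < r"
  shows "continuous_on (ball 0 r \<times> {0..1}) (\<lambda>(x, s). cpk r x s)"
proof -
  have "cp r s - x \<noteq> 0" if "x \<in> ball 0 r" for x s
  proof
    assume "cp r s - x = 0"
    then have "norm x = r" using norm_cp[of r s] assms by simp
    with that show False by simp
  qed
  then show ?thesis unfolding cpk_def
    by (auto simp: split_beta intro!: continuous_intros)
qed

lemma cpk_cont2:
  assumes "0 < r" "continuous_on S f" "continuous_on S g" "\<And>q. q \<in> S \<Longrightarrow> norm (f q) < r"
  shows "continuous_on S (\<lambda>q. cpk r (f q) (g q))"
proof -
  have "cp r (g q) - f q \<noteq> 0" if "q \<in> S" for q
  proof
    assume "cp r (g q) - f q = 0"
    then have "norm (f q) = r" using norm_cp[of r "g q"] assms by simp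
    with assms(4)[OF that] show False by simp
  qed
  then show ?thesis unfolding cpk_def
    by (auto intro!: continuous_intros assms)
qed

lemma osgood:
  fixes F :: "complex \<Rightarrow> complex \<Rightarrow> complex"
  assumes R: "0 < R"
   and cont: "continuous_on (ball 0 R \<times> ball 0 R) (\<lambda>(x,y). F x y)"
   and h1: "\<And>x. x \<in> ball 0 R \<Longrightarrow> F x holomorphic_on ball 0 R"
   and h2: "\<And>y. y \<in> ball 0 R \<Longrightarrow> (\<lambda>x. F x y) holomorphic_on ball 0 R"
  shows "(\<lambda>x. deriv (F x) 0) holomorphic_on ball 0 (R/2)"
proof -
  define r where "r = R/2"
  have r: "0 < r" "r < R" using R by (auto simp: r_def)
  have cpin: "cp r s \<in> ball 0 R" for s using norm_cp[of r s] r by simp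
  have K1: "deriv (\<lambda>w. F w (cp r t)) x = integral (cbox 0 1) (\<lambda>s. F (cp r s) (cp r t) * cpk r x s)"
    if "x \<in> ball 0 r" for x t
    using deriv_circle_integral[OF h2[OF cpin] r that] by (simp add: cbox_interval)
  have K2: "deriv (F x) 0 = integral (cbox 0 1) (\<lambda>t. F x (cp r t) * cpk r 0 t)"
    if "x \<in> ball 0 r" for x
    using deriv_circle_integral[OF h1 r, of x 0] that r by (simp add: cbox_interval)
  have "continuous_on ((ball 0 r \<times> {0..1}) \<times> cbox 0 1) (\<lambda>q. (\<lambda>(x,y). F x y) (cp r (snd q), cp r (snd (fst q))))"
    by (rule continuous_on_compose2[OF cont]) (use r in \<open>auto simp: norm_cp intro!: continuous_intros\<close>)
  then have contF: "continuous_on ((ball 0 r \<times> {0..1}) \<times> cbox 0 1) (\<lambda>(p, s). F (cp r s) (cp r (snd p)))"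
    by (simp add: split_beta)
  have contK: "continuous_on ((ball 0 r \<times> {0..1}) \<times> cbox 0 1) (\<lambda>(p, s). cpk r (fst p) s)"
    unfolding split_beta by (rule cpk_cont2[OF r(1)]) (auto intro!: continuous_intros)
  have C: "continuous_on (ball 0 r \<times> {0..1}) (\<lambda>p. integral (cbox 0 1) (\<lambda>s. F (cp r s) (cp r (snd p)) * cpk r (fst p) s))"
    by (rule integral_continuous_on_param) (use continuous_on_mult[OF contF contK] in \<open>simp add: split_beta\<close>)
  have C2: "continuous_on (ball 0 r \<times> {0..1}) (\<lambda>(x, t). deriv (\<lambda>w. F w (cp r t)) x)"
    by (rule continuous_on_eq[OF C]) (auto simp: K1)
  have C3: "continuous_on (ball 0 r \<times> cbox 0 1) (\<lambda>(x, t). deriv (\<lambda>w. F w (cp r t)) x * cpk r 0 t)"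
  proof -
    have "continuous_on (ball 0 r \<times> cbox 0 1) (\<lambda>p. cpk r 0 (snd p))"
      by (rule cpk_cont2[OF r(1)]) (auto simp: r intro!: continuous_intros)
    then show ?thesis using continuous_on_mult[OF C2[unfolded split_beta]] by (simp add: split_beta cbox_interval)
  qed
  have H: "(\<lambda>x. integral (cbox 0 1) (\<lambda>t. F x (cp r t) * cpk r 0 t)) holomorphic_on ball 0 r"
  proof (rule leibniz_rule_holomorphic[where fx="\<lambda>x t. deriv (\<lambda>w. F w (cp r t)) x * cpk r 0 t"])
    fix x :: complex and t :: real assume x: "x \<in> ball 0 r" and t: "t \<in> cbox (0::real) 1"
    have "x \<in> ball 0 R" using x r by auto
    then show "((\<lambda>x. F x (cp r t) * cpk r 0 t) has_field_derivative deriv (\<lambda>w. F w (cp r t)) x * cpk r 0 t) (at x within ball 0 r)"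
      by (intro DERIV_cmult_right holomorphic_derivI[OF h2[OF cpin]]) auto
  next
    fix x :: complex assume x: "x \<in> ball 0 r"
    have "continuous_on (cbox 0 1) (\<lambda>t. F x (cp r t))"
      using x r by (intro continuous_on_compose2[OF holomorphic_on_imp_continuous_on[OF h1]] continuous_intros) (auto simp: norm_cp)
    moreover have "continuous_on (cbox 0 1) (\<lambda>t. cpk r 0 t)"
      by (rule cpk_cont2[OF r(1)]) (auto simp: r intro!: continuous_intros)
    ultimately show "(\<lambda>t. F x (cp r t) * cpk r 0 t) integrable_on cbox 0 1"
      by (intro integrable_continuous continuous_on_mult)
  qed (use C3 in auto)
  have "(\<lambda>x. deriv (F x) 0) holomorphic_on ball 0 r"
    by (rule holomorphic_transform[OF H]) (simp add: K2)
  then show ?thesis by (simp add: r_def)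
qed



lemma smult_decomp: "(\<zeta>::complex) *s (v::complex^'n) = Re \<zeta> *\<^sub>R v + Im \<zeta> *\<^sub>R (\<i> *s v)"
proof -
  have "\<zeta> * x = complex_of_real (Re \<zeta>) * x + complex_of_real (Im \<zeta>) * (\<i> * x)" for x
    by (simp add: complex_eq_iff algebra_simps)
  then show ?thesis unfolding vec_eq_iff
    by (simp only: vector_add_component vector_scaleR_component vector_smult_component) (simp add: scaleR_conv_of_real)
qed

lemma smult_has_derivative:
  "((\<lambda>\<zeta>::complex. w + \<zeta> *s (v::complex^'n)) has_derivative (\<lambda>h. Re h *\<^sub>R v + Im h *\<^sub>R (\<i> *s v))) (at \<zeta>0)"
proof -
  have eq: "(\<lambda>\<zeta>::complex. w + \<zeta> *s v) = (\<lambda>\<zeta>. w + (Re \<zeta> *\<^sub>R v + Im \<zeta> *\<^sub>R (\<i> *s v)))"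
    by (rule ext, rule arg_cong[where f="(+) w"], rule smult_decomp)
  show ?thesis unfolding eq by (auto intro!: derivative_eq_intros)
qed

lemma continuous_on_smult_const[continuous_intros]:
  "continuous_on S f \<Longrightarrow> continuous_on S (\<lambda>x. f x *s (v::complex^'n))"
proof -
  assume f: "continuous_on S f"
  have eq: "(\<lambda>x. f x *s v) = (\<lambda>x. Re (f x) *\<^sub>R v + Im (f x) *\<^sub>R (\<i> *s v))"
    by (rule ext, rule smult_decomp)
  show ?thesis unfolding eq by (intro continuous_intros f)
qed

lemma line_field_deriv:
  fixes f :: "complex^'n \<Rightarrow> complex"
  assumes d: "(f has_derivative L) (at (w + \<zeta>0 *s v))" and hom: "\<forall>s u. L (s *s u) = s * L u"
  shows "((\<lambda>\<zeta>. f (w + \<zeta> *s v)) has_field_derivative L v) (at \<zeta>0)"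
proof -
  have lin: "linear L" using d has_derivative_linear by blast
  have "((\<lambda>\<zeta>. f (w + \<zeta> *s v)) has_derivative (\<lambda>h. L (Re h *\<^sub>R v + Im h *\<^sub>R (\<i> *s v)))) (at \<zeta>0)"
    using has_derivative_compose[OF smult_has_derivative d] by simp
  moreover have "L (Re h *\<^sub>R v + Im h *\<^sub>R (\<i> *s v)) = L v * h" for h
  proof -
    have "L (Re h *\<^sub>R v + Im h *\<^sub>R (\<i> *s v)) = L (h *s v)" by (rule arg_cong[where f=L], rule smult_decomp[symmetric])
    also have "\<dots> = L v * h" using hom by simp
    finally show ?thesis .
  qed
  ultimately have "((\<lambda>\<zeta>. f (w + \<zeta> *s v)) has_derivative (\<lambda>h. L v * h)) (at \<zeta>0)" by simp
  then show ?thesis by (simp add: has_field_derivative_def)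
qed

lemma line_vector_deriv:
  fixes f :: "complex^'n \<Rightarrow> complex"
  assumes d: "(f has_derivative L) (at w)"
  shows "((\<lambda>t::real. f (w + t *\<^sub>R v)) has_vector_derivative L v) (at 0)"
proof -
  have lin: "linear L" using d has_derivative_linear by blast
  have "((\<lambda>t::real. w + t *\<^sub>R v) has_derivative (\<lambda>h. h *\<^sub>R v)) (at 0)"
    by (auto intro!: derivative_eq_intros)
  from has_derivative_compose[OF this] d
  have "((\<lambda>t::real. f (w + t *\<^sub>R v)) has_derivative (\<lambda>h. L (h *\<^sub>R v))) (at 0)" by simp
  then show ?thesis unfolding has_vector_derivative_def using linear_scale[OF lin] by simp
qed



lemma norm_smult_axis: "norm ((\<zeta>::complex) *s axis i (1::complex) :: complex^'n) = norm \<zeta>"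
proof -
  have "(\<Sum>j\<in>UNIV. (norm ((\<zeta> *s axis i (1::complex) :: complex^'n) $ j))\<^sup>2) = (norm \<zeta>)\<^sup>2"
  proof -
    have "\<And>j. (norm ((\<zeta> *s axis i (1::complex) :: complex^'n) $ j))\<^sup>2 = (if j = i then (norm \<zeta>)\<^sup>2 else 0)"
      by (simp add: axis_def)
    then show ?thesis by simp
  qed
  then show ?thesis by (simp add: norm_vec_def L2_set_def)
qed

lemma holo_onD:
  assumes "holo_on f U" "w \<in> U"
  shows "(f has_derivative frechet_derivative f (at w)) (at w)"
    and "\<forall>s u. frechet_derivative f (at w) (s *s u) = s * frechet_derivative f (at w) u"
proof -
  obtain L where L: "(f has_derivative L) (at w)" "\<forall>(s::complex) v. L (s *s v) = s * L v"
    using assms unfolding holo_on_def by blast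
  have "L = frechet_derivative f (at w)" using frechet_derivative_at[OF L(1)] .
  with L show "(f has_derivative frechet_derivative f (at w)) (at w)"
    and "\<forall>s u. frechet_derivative f (at w) (s *s u) = s * frechet_derivative f (at w) u" by auto
qed

lemma axis_i: "axis k \<i> = \<i> *s (axis k 1 :: complex^'n)"
  by (simp add: vec_eq_iff axis_def)

lemma wirt_eq:
  assumes "holo_on f U" "w \<in> U"
  shows "wirtinger f k w = frechet_derivative f (at w) (axis k 1)"
proof -
  let ?L = "frechet_derivative f (at w)"
  note d = holo_onD[OF assms]
  have "dx f k w = ?L (axis k 1)"
    unfolding dx_def by (rule vector_derivative_at[OF line_vector_deriv[OF d(1)]])
  moreover have "dy f k w = ?L (axis k \<i>)"
    unfolding dy_def by (rule vector_derivative_at[OF line_vector_deriv[OF d(1)]])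
  moreover have "?L (axis k \<i>) = \<i> * ?L (axis k 1)"
    using d(2) by (simp add: axis_i)
  ultimately show ?thesis by (simp add: wirtinger_def field_simps)
qed



lemma holo_cont:
  assumes "holo_on g U" shows "continuous_on U g"
proof -
  have "isCont g w" if "w \<in> U" for w
    using has_derivative_continuous[OF holo_onD(1)[OF assms that]] .
  then show ?thesis by (simp add: continuous_at_imp_continuous_on)
qed

lemma line_deriv_holo:
  assumes holo: "holo_on g U" and pU: "w + \<zeta>0 *s v \<in> U"
  shows "((\<lambda>\<zeta>. g (w + \<zeta> *s v)) has_field_derivative frechet_derivative g (at (w + \<zeta>0 *s v)) v) (at \<zeta>0)"
  using line_field_deriv[OF holo_onD(1)[OF holo pU] holo_onD(2)[OF holo pU]] .

lemma phi_holo: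
  fixes z :: "complex^'n"
  assumes holo: "holo_on g U" and U: "open U" and z: "z \<in> U"
  shows "\<exists>r>0. (\<lambda>\<zeta>. wirtinger g k (z + \<zeta> *s axis i 1)) holomorphic_on ball 0 r"
proof -
  obtain e where e: "e > 0" "ball z e \<subseteq> U" using U z open_contains_ball by blast
  define R where "R = e / 2"
  have R: "R > 0" using e by (simp add: R_def)
  have inU: "z + x *s axis i 1 + y *s axis k 1 \<in> U" if "norm x < R" "norm y < R" for x y
  proof -
    have "norm (x *s axis i 1 + y *s axis k 1 :: complex^'n) \<le> norm x + norm y"
      using norm_triangle_ineq[of "x *s axis i 1 :: complex^'n" "y *s axis k 1"] by (simp add: norm_smult_axis)
    also have "\<dots> < e" using that by (simp add: R_def)
    finally have "norm (x *s axis i 1 + y *s axis k 1 :: complex^'n) < e" .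
    moreover have "dist z (z + (x *s axis i 1 + y *s axis k 1)) = norm (x *s axis i 1 + y *s axis k 1)"
      by (metis add_diff_cancel_left' dist_norm dist_commute)
    ultimately have "z + x *s axis i 1 + y *s axis k 1 \<in> ball z e" by (simp add: add.assoc)
    then show ?thesis using e by blast
  qed
  define F where "F x y = g (z + x *s axis i 1 + y *s axis k 1)" for x y
  have contg: "continuous_on U g" using holo_cont[OF holo] .
  have "continuous_on (ball 0 R \<times> ball 0 R) (\<lambda>p. g (z + fst p *s axis i 1 + snd p *s axis k 1))"
    by (rule continuous_on_compose2[OF contg]) (auto intro!: continuous_intros inU)
  then have cont: "continuous_on (ball 0 R \<times> ball 0 R) (\<lambda>(x,y). F x y)"
    by (simp add: F_def split_beta)
  have h1: "F x holomorphic_on ball 0 R" if "x \<in> ball 0 R" for x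
    unfolding holomorphic_on_def field_differentiable_def F_def
  proof
    fix y :: complex assume "y \<in> ball 0 R"
    then have "z + x *s axis i 1 + y *s axis k 1 \<in> U" using that inU by simp
    from line_deriv_holo[OF holo this]
    show "\<exists>f'. ((\<lambda>y. g (z + x *s axis i 1 + y *s axis k 1)) has_field_derivative f') (at y within ball 0 R)"
      using has_field_derivative_at_within by blast
  qed
  have h2: "(\<lambda>x. F x y) holomorphic_on ball 0 R" if "y \<in> ball 0 R" for y
    unfolding holomorphic_on_def field_differentiable_def F_def
  proof
    fix x :: complex assume "x \<in> ball 0 R"
    then have "z + y *s axis k 1 + x *s axis i 1 \<in> U" using that inU[of x y] by (simp add: add_ac)
    from line_deriv_holo[OF holo this]
    have "\<exists>f'. ((\<lambda>x. g (z + y *s axis k 1 + x *s axis i 1)) has_field_derivative f') (at x within ball 0 R)"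
      using has_field_derivative_at_within by blast
    then show "\<exists>f'. ((\<lambda>x. g (z + x *s axis i 1 + y *s axis k 1)) has_field_derivative f') (at x within ball 0 R)"
      by (simp add: add_ac)
  qed
  have H: "(\<lambda>x. deriv (F x) 0) holomorphic_on ball 0 (R/2)"
    by (rule osgood[OF R cont h1 h2])
  have eq: "deriv (F x) 0 = wirtinger g k (z + x *s axis i 1)" if "x \<in> ball 0 (R/2)" for x
  proof -
    have w: "z + x *s axis i 1 + 0 *s axis k 1 \<in> U" using inU[of x 0] that R by simp
    have "deriv (F x) 0 = frechet_derivative g (at (z + x *s axis i 1 + 0 *s axis k 1)) (axis k 1)"
      unfolding F_def by (rule DERIV_imp_deriv[OF line_deriv_holo[OF holo w]])
    also have "\<dots> = wirtinger g k (z + x *s axis i 1)"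
      using wirt_eq[OF holo w] by simp
    finally show ?thesis .
  qed
  have "(\<lambda>\<zeta>. wirtinger g k (z + \<zeta> *s axis i 1)) holomorphic_on ball 0 (R/2)"
    by (rule holomorphic_transform[OF H]) (simp add: eq)
  then show ?thesis using R by (intro exI[of _ "R/2"]) auto
qed



lemma pt_eq: "z + t *\<^sub>R (c *s v) = z + (complex_of_real t * c) *s (v::complex^'n)"
  unfolding vec_eq_iff
  by (simp only: vector_add_component vector_scaleR_component vector_smult_component) (simp add: scaleR_conv_of_real)

lemma tilde_wirt:
  assumes holo: "holo_on g U" and U: "open U" and z: "z \<in> U"
  shows "wirtinger (tilde g) i z = cnj (wirtinger g i z)"
proof -
  define \<phi> where "\<phi> k \<zeta> = wirtinger g k (z + \<zeta> *s axis i 1)" for k \<zeta>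
  have D: "(\<phi> k has_field_derivative deriv (\<phi> k) 0) (at 0)" for k
  proof -
    obtain r where r: "r > 0" "(\<lambda>\<zeta>. wirtinger g k (z + \<zeta> *s axis i 1)) holomorphic_on ball 0 r"
      using phi_holo[OF holo U z] by blast
    then show ?thesis unfolding \<phi>_def by (intro holomorphic_derivI[of _ "ball 0 r"]) auto
  qed
  have V: "vector_derivative (\<lambda>t. tilde g (z + t *\<^sub>R (c *s axis i 1))) (at 0) =
      (\<Sum>k\<in>UNIV. cnj (\<phi> k 0) * (c * axis i 1 $ k) + cnj (deriv (\<phi> k) 0 * c) * z $ k)" for c
  proof -
    have T: "(\<lambda>t. tilde g (z + t *\<^sub>R (c *s axis i 1))) =
      (\<lambda>t. \<Sum>k\<in>UNIV. cnj (\<phi> k (of_real t * c)) * (z $ k + of_real t * (c * axis i 1 $ k)))"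
      unfolding pt_eq by (simp add: tilde_def \<phi>_def mult.assoc)
    have D1: "((\<lambda>t::real. \<phi> k (of_real t * c)) has_vector_derivative deriv (\<phi> k) 0 * c) (at 0)" for k
    proof -
      have a: "((\<lambda>x. x * c) has_field_derivative c) (at 0)" by (auto intro!: derivative_eq_intros)
      have b: "(\<phi> k has_field_derivative deriv (\<phi> k) 0) (at ((\<lambda>x. x * c) 0))" using D[of k] by simp
      have "((\<lambda>x. \<phi> k (x * c)) has_field_derivative deriv (\<phi> k) 0 * c) (at (of_real 0))"
        using DERIV_chain2[OF b a] by simp
      then show ?thesis using has_vector_derivative_real_field by blast
    qed
    have D2: "((\<lambda>t::real. z $ k + of_real t * (c * axis i 1 $ k)) has_vector_derivative (c * axis i 1 $ k)) (at 0)" for k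
    proof -
      have "((\<lambda>x. z $ k + x * (c * axis i 1 $ k)) has_field_derivative (c * axis i 1 $ k)) (at (of_real 0))"
        by (auto intro!: derivative_eq_intros)
      then show ?thesis using has_vector_derivative_real_field by blast
    qed
    have "((\<lambda>t. \<Sum>k\<in>UNIV. cnj (\<phi> k (of_real t * c)) * (z $ k + of_real t * (c * axis i 1 $ k)))
       has_vector_derivative
       (\<Sum>k\<in>UNIV. cnj (\<phi> k (of_real 0 * c)) * (c * axis i 1 $ k) + cnj (deriv (\<phi> k) 0 * c) * (z $ k + of_real 0 * (c * axis i 1 $ k)))) (at 0)"
      by (intro has_vector_derivative_sum has_vector_derivative_mult has_vector_derivative_cnj D1 D2)
    then show ?thesis unfolding T by (simp add: vector_derivative_at)
  qed
  have sd: "(\<Sum>k\<in>UNIV. cnj (\<phi> k 0) * (c * axis i 1 $ k)) = cnj (\<phi> i 0) * c" for c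
  proof -
    have "cnj (\<phi> k 0) * (c * axis i 1 $ k) = (if k = i then cnj (\<phi> i 0) * c else 0)" for k
      by (simp add: axis_def)
    then show ?thesis by simp
  qed
  define S where "S = (\<Sum>k\<in>UNIV. cnj (deriv (\<phi> k) 0) * z $ k)"
  have dxv: "dx (tilde g) i z = cnj (\<phi> i 0) + S"
    using V[of 1] sd[of 1] unfolding dx_def S_def by (simp add: sum.distrib)
  have dyv: "dy (tilde g) i z = cnj (\<phi> i 0) * \<i> - \<i> * S"
  proof -
    have "dy (tilde g) i z = (\<Sum>k\<in>UNIV. cnj (\<phi> k 0) * (\<i> * axis i 1 $ k) + cnj (deriv (\<phi> k) 0 * \<i>) * z $ k)"
      using V[of \<i>] unfolding dy_def axis_i by simp
    also have "\<dots> = cnj (\<phi> i 0) * \<i> + (\<Sum>k\<in>UNIV. - \<i> * (cnj (deriv (\<phi> k) 0) * z $ k))"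
      using sd[of \<i>] by (simp add: sum.distrib sum_subtractf sum_negf mult.assoc mult.left_commute)
    also have "\<dots> = cnj (\<phi> i 0) * \<i> - \<i> * S"
      by (simp add: S_def sum_distrib_left[symmetric] sum_negf)
    finally show ?thesis .
  qed
  have "wirtinger (tilde g) i z = cnj (\<phi> i 0)"
    unfolding wirtinger_def dxv dyv by (simp add: field_simps)
  then show ?thesis by (simp add: \<phi>_def)
qed



definition mcnj :: "complex^'n^'m \<Rightarrow> complex^'n^'m" where
  "mcnj M = (\<chi> i j. cnj (M $ i $ j))"

lemma vm_sum: "(\<Sum>l\<in>A. f l) v* (M::complex^'n^'m) = (\<Sum>l\<in>A. f l v* M)"
  by (simp add: vec_eq_iff vector_matrix_mult_def sum_component sum_distrib_right) (rule allI, rule sum.swap)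

lemma vm_smult: "(a *s x) v* (M::complex^'n^'m) = a *s (x v* M)"
  by (simp add: vec_eq_iff vector_matrix_mult_def sum_distrib_left mult_ac)

lemma vm_add: "(x + y) v* (M::complex^'n^'m) = x v* M + y v* M"
  by (simp add: vec_eq_iff vector_matrix_mult_def sum.distrib distrib_right)

lemma vm_neg: "(- x) v* (M::complex^'n^'m) = - (x v* M)"
  by (simp add: vec_eq_iff vector_matrix_mult_def sum_negf)

lemma vm_zero: "0 v* (M::complex^'n^'m) = 0"
  by (simp add: vec_eq_iff vector_matrix_mult_def)

lemma cnj_vec_sum: "cnj_vec (\<Sum>l\<in>A. f l) = (\<Sum>l\<in>A. cnj_vec (f l))"
  by (simp add: vec_eq_iff cnj_vec_def sum_component cnj_sum)

lemma cnj_vec_smult: "cnj_vec (a *s x) = cnj a *s cnj_vec x"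
  by (simp add: vec_eq_iff cnj_vec_def)

lemma cnj_vec_neg: "cnj_vec (- x) = - cnj_vec x"
  by (simp add: vec_eq_iff cnj_vec_def)

lemma cnj_vec_cnj_vec[simp]: "cnj_vec (cnj_vec x) = x"
  by (simp add: vec_eq_iff cnj_vec_def)

lemma cnj_vec_zero[simp]: "cnj_vec 0 = 0"
  by (simp add: vec_eq_iff cnj_vec_def)

lemma cnj_vec_eq_0: "cnj_vec x = 0 \<longleftrightarrow> x = 0"
  by (metis cnj_vec_cnj_vec cnj_vec_zero)

lemma cnj_vm: "cnj_vec (x v* M) = cnj_vec x v* mcnj (M::complex^'n^'m)"
  by (simp add: vec_eq_iff cnj_vec_def vector_matrix_mult_def mcnj_def cnj_sum)

lemma span_expl:
  assumes "finite A"
  shows "vec.span (f ` A) = {(\<Sum>m\<in>A. a m *s f m) | a. True}"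
proof
  show "{(\<Sum>m\<in>A. a m *s f m) | a. True} \<subseteq> vec.span (f ` A)"
  proof clarify
    fix a show "(\<Sum>m\<in>A. a m *s f m) \<in> vec.span (f ` A)"
      by (rule vec.span_sum, rule vec.span_scale, rule vec.span_base) auto
  qed
next
  let ?T = "{(\<Sum>m\<in>A. a m *s f m) | a. True}"
  have "vec.subspace ?T"
    unfolding vec.subspace_def
  proof (intro conjI ballI allI)
    show "0 \<in> ?T" by (rule CollectI, rule exI[of _ "\<lambda>_. 0"]) simp
  next
    fix x y assume "x \<in> ?T" "y \<in> ?T"
    then obtain a b where "x = (\<Sum>m\<in>A. a m *s f m)" "y = (\<Sum>m\<in>A. b m *s f m)" by blast
    then have "x + y = (\<Sum>m\<in>A. (a m + b m) *s f m)"
      by (simp add: sum.distrib vector_sadd_rdistrib)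
    then show "x + y \<in> ?T" by (intro CollectI exI[of _ "\<lambda>m. a m + b m"]) simp
  next
    fix c x assume "x \<in> ?T"
    then obtain a where "x = (\<Sum>m\<in>A. a m *s f m)" by blast
    then have "c *s x = (\<Sum>m\<in>A. (c * a m) *s f m)"
      by (simp add: vec.scale_sum_right)
    then show "c *s x \<in> ?T" by (intro CollectI exI[of _ "\<lambda>m. c * a m"]) simp
  qed
  moreover have "f ` A \<subseteq> ?T"
  proof
    fix x assume "x \<in> f ` A"
    then obtain m where m: "m \<in> A" "x = f m" by blast
    have "(\<Sum>j\<in>A. (if j = m then 1 else 0) *s f j) = (\<Sum>j\<in>A. (if j = m then f j else 0))"
      by (rule sum.cong) auto
    also have "\<dots> = f m" using assms m by simp
    finally show "x \<in> ?T" using m by (intro CollectI exI[of _ "\<lambda>j. if j = m then 1 else 0"]) simp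
  qed
  ultimately show "vec.span (f ` A) \<subseteq> ?T" using vec.span_minimal by blast
qed



lemma row_vm: "row i (P::complex^'n^'m) = axis i 1 v* P"
proof -
  have "(if l = i then 1 else 0) * P $ l $ j = (if l = i then P $ i $ j else 0)" for l j
    by simp
  then show ?thesis by (simp add: vec_eq_iff row_def vector_matrix_mult_def axis_def)
qed

lemma dim_ker_rank:
  fixes P :: "complex^'n^'n"
  shows "vec.dim {u. u v* P = 0} + rank P \<le> CARD('n)"
proof -
  let ?K = "{u. u v* P = 0}"
  let ?f = "\<lambda>u. u v* P"
  obtain B where B: "B \<subseteq> ?K" "vec.independent B" "?K \<subseteq> vec.span B" "card B = vec.dim ?K"
    using vec.basis_exists by blast
  obtain C where C: "B \<subseteq> C" "vec.independent C" "UNIV \<subseteq> vec.span C"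
    by (rule vec.maximal_independent_subset_extend[OF subset_UNIV B(2)]) simp
  have fC: "finite C" using vec.finiteI_independent[OF C(2)] .
  have cC: "card C = CARD('n)"
    using vec.basis_card_eq_dim[of C UNIV] C vec_dim_card by auto
  have all: "?f u \<in> vec.span (?f ` (C - B))" for u
  proof -
    have "u \<in> vec.span C" using C(3) by blast
    then show ?thesis
    proof (rule vec.span_induct)
      show "vec.subspace {u. ?f u \<in> vec.span (?f ` (C - B))}"
        unfolding vec.subspace_def
        by (auto simp: vm_zero vm_add vm_smult intro: vec.span_add vec.span_scale vec.span_zero)
    next
      fix x assume x: "x \<in> C"
      show "?f x \<in> vec.span (?f ` (C - B))"
      proof (cases "x \<in> B")
        case True then have "?f x = 0" using B(1) by blast
        then show ?thesis by (simp add: vec.span_zero)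
      next
        case False then show ?thesis using x by (intro vec.span_base) auto
      qed
    qed
  qed
  have "rows P \<subseteq> vec.span (?f ` (C - B))"
    using all by (auto simp: rows_def row_vm)
  then have "rank P \<le> card (?f ` (C - B))"
    unfolding row_rank_def_gen using fC by (intro vec.dim_le_card) auto
  also have "\<dots> \<le> card (C - B)" using fC by (intro card_image_le) auto
  also have "\<dots> = card C - card B" using C(1) fC by (simp add: card_Diff_subset finite_subset)
  finally show ?thesis using B(4) cC C(1) fC card_mono[OF fC C(1)] by linarith
qed



lemma mcnj_mcnj[simp]: "mcnj (mcnj M) = M"
  by (simp add: mcnj_def vec_eq_iff)

lemma vm_diff: "(x - y) v* (M::complex^'n^'m) = x v* M - y v* M"
  by (simp add: vec_eq_iff vector_matrix_mult_def sum_subtractf left_diff_distrib)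

theorem mainTheorem17:
  fixes c :: "'n::finite \<Rightarrow> 'n \<Rightarrow> 'n \<Rightarrow> real"
    and z0 :: "complex^'n" and U :: "(complex^'n) set"
    and g :: "nat \<Rightarrow> complex^'n \<Rightarrow> complex"
  assumes lie: "lie_structure_constants c"
    and nonab: "nonabelian c"
    and z0_reg: "z0 \<notin> Sing c"
    and U_open: "open U" and z0_U: "z0 \<in> U" and U_reg: "U \<inter> Sing c = {}"
    and holo: "\<forall>m < lie_rank c. holo_on (g m) U"
    and casimir: "\<forall>m < lie_rank c. \<forall>z\<in>U. hamfield c (g m) z = 0"
    and indep: "\<forall>z\<in>U. \<forall>a :: nat \<Rightarrow> complex.
                  (\<forall>v. (\<Sum>m<lie_rank c. a m * frechet_derivative (g m) (at z) v) = 0)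
                  \<longrightarrow> (\<forall>m < lie_rank c. a m = 0)"
  shows "\<forall>z \<in> coadjoint_orbit c z0 \<inter> U.
           T10_orbit c z = vec.span {hamfield c (tilde (g m)) z | m. m < lie_rank c}"
proof (intro ballI)
  fix z assume "z \<in> coadjoint_orbit c z0 \<inter> U"
  then have zU: "z \<in> U" by blast
  define r where "r = lie_rank c"
  define P where "P = poisson_matrix c z"
  define G where "G m = (\<chi> i. wirtinger (g m) i z)" for m
  define H where "H m = hamfield c (tilde (g m)) z" for m
  have ham: "hamfield c f z = (\<chi> i. wirtinger f i z) v* P" for f
    by (simp add: vec_eq_iff hamfield_def vector_matrix_mult_def P_def poisson_matrix_def sum_distrib_right sum_distrib_left mult_ac)
  have HG: "H m = cnj_vec (G m) v* P" if "m < r" for m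
  proof -
    have "(\<chi> i. wirtinger (tilde (g m)) i z) = cnj_vec (G m)"
      using tilde_wirt[of "g m" U z] holo that U_open zU by (simp add: vec_eq_iff cnj_vec_def G_def r_def)
    then show ?thesis by (simp add: H_def ham)
  qed
  have KG: "G m v* P = 0" if "m < r" for m
    using casimir that zU ham[of "g m"] by (simp add: G_def r_def)
  have fd: "frechet_derivative (g m) (at z) v = (\<Sum>i\<in>UNIV. v $ i * G m $ i)" if "m < r" for m v
  proof -
    have hm: "holo_on (g m) U" using holo that by (simp add: r_def)
    let ?L = "frechet_derivative (g m) (at z)"
    have lin: "linear ?L" using has_derivative_linear[OF holo_onD(1)[OF hm zU]] .
    have "?L v = ?L (\<Sum>i\<in>UNIV. v $ i *s axis i 1)" by (simp add: basis_expansion)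
    also have "\<dots> = (\<Sum>i\<in>UNIV. ?L (v $ i *s axis i 1))" by (rule linear_sum[OF lin])
    also have "\<dots> = (\<Sum>i\<in>UNIV. v $ i * G m $ i)"
      using holo_onD(2)[OF hm zU] wirt_eq[OF hm zU] by (simp add: G_def)
    finally show ?thesis .
  qed
  have indG: "\<forall>m<r. a m = 0" if a: "(\<Sum>m<r. a m *s G m) = 0" for a
  proof -
    have "(\<Sum>m<r. a m * frechet_derivative (g m) (at z) v) = 0" for v
    proof -
      have "(\<Sum>m<r. a m * frechet_derivative (g m) (at z) v) = (\<Sum>m<r. a m * (\<Sum>i\<in>UNIV. v $ i * G m $ i))"
        by (rule sum.cong) (auto simp: fd)
      also have "\<dots> = (\<Sum>i\<in>UNIV. v $ i * (\<Sum>m<r. a m *s G m) $ i)"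
        by (simp add: sum_component sum_distrib_left mult_ac) (rule sum.swap)
      also have "\<dots> = 0" using a by simp
      finally show ?thesis .
    qed
    then show ?thesis using indep zU by (simp add: r_def)
  qed
  have inj: "inj_on G {..<r}"
  proof (rule inj_onI, rule ccontr)
    fix p q assume p: "p \<in> {..<r}" and q: "q \<in> {..<r}" and e: "G p = G q" and ne: "p \<noteq> q"
    define a where "a m = (if m = p then 1 else if m = q then -1 else (0::complex))" for m
    have "a m *s G m = (if m = p then G p else 0) - (if m = q then G q else 0)" for m
      using ne by (simp add: a_def)
    then have "(\<Sum>m<r. a m *s G m) = G p - G q" using p q by (simp add: sum_subtractf)
    then have "\<forall>m<r. a m = 0" using e indG by simp
    then have "a p = 0" using p by simp
    then show False by (simp add: a_def)
  qed
  let ?S = "G ` {..<r}"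
  have indS: "vec.independent ?S"
  proof
    assume "vec.dependent ?S"
    then obtain u where u: "\<exists>v\<in>?S. u v \<noteq> 0" "(\<Sum>v\<in>?S. u v *s v) = 0"
      using vec.dependent_finite[of ?S] by auto
    have "(\<Sum>m<r. u (G m) *s G m) = 0" using u(2) by (simp add: sum.reindex[OF inj])
    then have "\<forall>m<r. u (G m) = 0" by (rule indG)
    then show False using u(1) by auto
  qed
  have cardS: "card ?S = r" using card_image[OF inj] by simp
  have "z \<notin> Sing c" using U_reg zU by blast
  then have rk: "max_rank c \<le> rank P" by (simp add: Sing_def P_def)
  let ?K = "{u. u v* P = 0}"
  have "vec.dim ?K \<le> r"
    using dim_ker_rank[of P] rk by (simp add: r_def lie_rank_def)
  moreover have "?S \<subseteq> ?K" using KG by auto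
  ultimately have KS: "?K \<subseteq> vec.span ?S"
    using vec.card_ge_dim_independent[of ?S ?K] indS cardS by simp
  have T10: "T10_orbit c z = {Y v* P | Y. Y v* mcnj P = 0}"
  proof -
    define re where "re X = (\<chi> i. complex_of_real (X $ i))" for X :: "real^'n"
    have coad_eq: "coad c X z = - (re X v* P)" for X
      by (simp add: vec_eq_iff coad_def vector_matrix_mult_def P_def poisson_matrix_def re_def sum_distrib_right sum_distrib_left mult_ac)
    have cre: "cnj_vec (re X) = re X" for X by (simp add: vec_eq_iff cnj_vec_def re_def)
    have cnj_coad: "cnj_vec (coad c X z) = - (re X v* mcnj P)" for X
      by (simp add: coad_eq cnj_vec_neg cnj_vm cre)
    show ?thesis
    proof (intro equalityI subsetI)
      fix a assume "a \<in> T10_orbit c z"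
      then have "(a, 0) \<in> complexified (orbit_tangent c z)" by (simp add: T10_orbit_def)
      then have "\<exists>(k::nat) b w. (a, 0) = (\<Sum>l<k. b l *s w l, \<Sum>l<k. b l *s cnj_vec (w l)) \<and> (\<forall>l<k. w l \<in> orbit_tangent c z)"
        unfolding complexified_def by (simp only: mem_Collect_eq)
      then obtain k :: nat and b w where ab: "(a, 0) = (\<Sum>l<k. b l *s w l, \<Sum>l<k. b l *s cnj_vec (w l))"
        and w: "\<forall>l<k. w l \<in> orbit_tangent c z" by blast
      from ab have ab1: "a = (\<Sum>l<k. b l *s w l)" and ab0: "(\<Sum>l<k. b l *s cnj_vec (w l)) = 0" by auto
      define Xf where "Xf l = (SOME X. w l = coad c X z)" for l
      have wX: "w l = coad c (Xf l) z" if "l < k" for l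
      proof -
        have "\<exists>X. w l = coad c X z" using w that by (auto simp: orbit_tangent_def)
        then show ?thesis unfolding Xf_def by (rule someI_ex)
      qed
      define Y where "Y = - (\<Sum>l<k. b l *s re (Xf l))"
      have "a = (\<Sum>l<k. b l *s w l)" using ab1 by simp
      also have "\<dots> = (\<Sum>l<k. b l *s (- (re (Xf l) v* P)))" by (rule sum.cong) (auto simp: wX coad_eq)
      also have "\<dots> = Y v* P" by (simp add: Y_def vm_neg vm_sum vm_smult sum_negf)
      finally have aY: "a = Y v* P" .
      have "0 = (\<Sum>l<k. b l *s cnj_vec (w l))" using ab0 by simp
      also have "\<dots> = (\<Sum>l<k. b l *s (- (re (Xf l) v* mcnj P)))" by (rule sum.cong) (auto simp: wX cnj_coad)
      also have "\<dots> = Y v* mcnj P" by (simp add: Y_def vm_neg vm_sum vm_smult sum_negf)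
      finally have "Y v* mcnj P = 0" by simp
      then show "a \<in> {Y v* P |Y. Y v* mcnj P = 0}" using aY by blast
    next
      fix a assume "a \<in> {Y v* P |Y. Y v* mcnj P = 0}"
      then obtain Y where aY: "a = Y v* P" and Y: "Y v* mcnj P = 0" by blast
      define X0 where "X0 = (\<chi> i. - Re (Y $ i))"
      define X1 where "X1 = (\<chi> i. - Im (Y $ i))"
      define b where "b l = (if l = 0 then 1 else \<i>)" for l :: nat
      define w where "w l = (if l = 0 then coad c X0 z else coad c X1 z)" for l :: nat
      have Yd: "Y = - re X0 + \<i> *s (- re X1)"
        by (simp add: vec_eq_iff re_def X0_def X1_def complex_eq_iff)
      have s1: "(\<Sum>l<2. b l *s w l) = w 0 + \<i> *s w 1"
        by (simp add: numeral_2_eq_2 b_def)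
      have s2: "(\<Sum>l<2. b l *s cnj_vec (w l)) = cnj_vec (w 0) + \<i> *s cnj_vec (w 1)"
        by (simp add: numeral_2_eq_2 b_def)
      have e1: "w 0 + \<i> *s w 1 = Y v* P"
        by (simp add: w_def coad_eq Yd vm_add vm_neg vm_smult vm_diff)
      have e2: "cnj_vec (w 0) + \<i> *s cnj_vec (w 1) = Y v* mcnj P"
        by (simp add: w_def cnj_coad Yd vm_add vm_neg vm_smult vm_diff)
      have "(a, 0) = (\<Sum>l<2. b l *s w l, \<Sum>l<2. b l *s cnj_vec (w l))"
        using s1 s2 e1 e2 aY Y by simp
      moreover have "\<forall>l<2. w l \<in> orbit_tangent c z" by (auto simp: w_def orbit_tangent_def)
      ultimately have "(a, 0) \<in> complexified (orbit_tangent c z)"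
        unfolding complexified_def by blast
      then show "a \<in> T10_orbit c z" by (simp add: T10_orbit_def)
    qed
  qed
  have setH: "{hamfield c (tilde (g m)) z | m. m < lie_rank c} = H ` {..<r}"
    by (auto simp: H_def r_def)
  show "T10_orbit c z = vec.span {hamfield c (tilde (g m)) z | m. m < lie_rank c}"
    unfolding setH T10
  proof
    show "{Y v* P |Y. Y v* mcnj P = 0} \<subseteq> vec.span (H ` {..<r})"
    proof clarify
      fix Y assume Y: "Y v* mcnj P = 0"
      have "cnj_vec Y v* P = cnj_vec (Y v* mcnj P)" using cnj_vm[of Y "mcnj P"] by simp
      then have "cnj_vec Y \<in> ?K" using Y by simp
      then have "cnj_vec Y \<in> vec.span ?S" using KS by blast
      then obtain b where b: "cnj_vec Y = (\<Sum>m<r. b m *s G m)" using span_expl[of "{..<r}" G] by auto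
      have "Y = cnj_vec (cnj_vec Y)" by simp
      also have "\<dots> = (\<Sum>m<r. cnj (b m) *s cnj_vec (G m))" unfolding b by (simp add: cnj_vec_sum cnj_vec_smult)
      finally have "Y v* P = (\<Sum>m<r. cnj (b m) *s (cnj_vec (G m) v* P))" by (simp add: vm_sum vm_smult)
      also have "\<dots> = (\<Sum>m<r. cnj (b m) *s H m)" by (rule sum.cong) (auto simp: HG)
      finally show "Y v* P \<in> vec.span (H ` {..<r})" using span_expl[of "{..<r}" H] by auto
    qed
  next
    show "vec.span (H ` {..<r}) \<subseteq> {Y v* P |Y. Y v* mcnj P = 0}"
    proof
      fix x assume "x \<in> vec.span (H ` {..<r})"
      then obtain b where b: "x = (\<Sum>m<r. b m *s H m)" using span_expl[of "{..<r}" H] by auto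
      define Y where "Y = (\<Sum>m<r. b m *s cnj_vec (G m))"
      have "x = (\<Sum>m<r. b m *s (cnj_vec (G m) v* P))" unfolding b by (rule sum.cong) (auto simp: HG)
      also have "\<dots> = Y v* P" by (simp add: Y_def vm_sum vm_smult)
      finally have xY: "x = Y v* P" .
      have cY: "cnj_vec Y = (\<Sum>m<r. cnj (b m) *s G m)" by (simp add: Y_def cnj_vec_sum cnj_vec_smult)
      have "Y v* mcnj P = cnj_vec (cnj_vec Y v* P)" using cnj_vm[of "cnj_vec Y" P] by simp
      also have "cnj_vec Y v* P = (\<Sum>m<r. cnj (b m) *s (G m v* P))" by (simp add: cY vm_sum vm_smult)
      also have "\<dots> = 0" by (rule sum.neutral) (simp add: KG)
      finally have "Y v* mcnj P = 0" by simp
      then show "x \<in> {Y v* P |Y. Y v* mcnj P = 0}" using xY by blast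
    qed
  qed
qed


end
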